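(* Let $F:[0,\infty)\to[0,\infty)$ be smooth with bounded derivatives of orders $0,1,\dots,n$, and set $\mathcal{F}^*_n=\max\{2^{n-k}\|F^{(k)}\|_\infty:\ 0\le k\le n\}$ where $F^{(k)}=\mathrm{d}^kF/\mathrm{d}x^k$. Let $y\in\mathbb{R}^2$, $\phi$ any locally finite simple marked configuration and $z_1,\dots,z_n\in\mathbb{R}^2$, where the added marks $h_{z_1},\dots,h_{z_n}$ are i.i.d. copies of $h$. Then $$\Big|\mathbb{E}_{h_{z_1},\dots,h_{z_n}}\big[F^{(n)}_{z_1,\dots,z_n}(I(y,\phi))\big]\Big|\le \mathcal{F}^*_n\prod_{i=1}^n\int_0^1 G\Big(\frac{a}{\ell(z_i-y)}\Big)\mathrm{d}a\le \mathcal{F}^*_n\prod_{i=1}^n\min\{1,\mathbb{E}[h]\,\ell(z_i-y)\}.$$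
   Context: Setup: $h\ge 0$ is a random variable (fading) with complementary CDF $G(t)=\mathbb{P}(h>t)$ (with the convention $G(a/0)=G(\infty)=0$). $\ell:\mathbb{R}^2\to[0,\infty)$ depends only on $\|x\|$. A marked configuration $\phi$ is a locally finite simple set of points of $\mathbb{R}^2$, each point $x$ carrying a mark $h_x\ge0$. For $y\in\mathbb{R}^2$, $I(y,\phi)=\sum_{x\in\phi}h_x\ell(x-y)$ and, for $z\in\mathbb{R}^2$, $I_z(y,\phi)=\sum_{x\in\phi\cap B(o,\|z\|)}h_x\ell(x-y)$, $B(o,r)$ the closed ball of radius $r$ about the origin. Ordering: $x\preccurlyeq z$ iff $\|x\|\le\|z\|$. $\|\cdot\|_\infty$ is the essential supremum norm on $[0,\infty)$. Expansion kernels: for points $z_1,\dots,z_n$ with added marks $h_{z_1},\dots,h_{z_n}$, $$F^{(n)}_{z_1,\dots,z_n}(I(y,\phi))=\begin{cases}\sum_{j=0}^n(-1)^{n-j}\sum_{\Pi\subset\{1,\dots,n\},|\Pi|=j}F\big(I_{z_n}(y,\phi)+\sum_{i\in\Pi}h_{z_i}\ell(z_i-y)\big),& z_n\preccurlyeq\cdots\preccurlyeq z_1,\\ 0,&\text{otherwise.}\end{cases}$$ $\mathbb{E}_{h_{z_1},\dots,h_{z_n}}$ is expectation over the added marks only. *)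

theory Defs
  imports "HOL-Probability.Probability"
begin

text \<open>Complementary CDF of the fading distribution M: G(t) = P(h > t).\<close>
definition ccdf :: "real measure \<Rightarrow> real \<Rightarrow> real" where
  "ccdf M t = measure M {x. t < x}"

text \<open>G(a / l) with the convention G(a/0) = G(infinity) = 0.\<close>
definition ccdf_div :: "real measure \<Rightarrow> real \<Rightarrow> real \<Rightarrow> real" where
  "ccdf_div M a l = (if l = 0 then 0 else ccdf M (a / l))"

text \<open>Sup norm on [0,infinity) (for continuous functions equals the essential sup norm).\<close>
definition supnorm0 :: "(real \<Rightarrow> real) \<Rightarrow> real" where
  "supnorm0 f = (SUP x\<in>{0..}. \<bar>f x\<bar>)"

text \<open>Truncated interference I_z(y,phi): configuration = point set P with marks hm.\<close>
definition Itrunc :: "(real^2 \<Rightarrow> real) \<Rightarrow> (real^2) set \<Rightarrow> (real^2 \<Rightarrow> real)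
    \<Rightarrow> real^2 \<Rightarrow> real^2 \<Rightarrow> real" where
  "Itrunc l P hm z y = (\<Sum>x\<in>P \<inter> cball 0 (norm z). hm x * l (x - y))"

text \<open>Expansion kernel F^(n)_{z_1..z_n}(I(y,phi)); points z 1,...,z n with added marks hz 1,...,hz n.\<close>
definition expansion_kernel :: "(real \<Rightarrow> real) \<Rightarrow> (real^2 \<Rightarrow> real) \<Rightarrow> (real^2) set
    \<Rightarrow> (real^2 \<Rightarrow> real) \<Rightarrow> nat \<Rightarrow> (nat \<Rightarrow> real^2) \<Rightarrow> (nat \<Rightarrow> real) \<Rightarrow> real^2 \<Rightarrow> real" where
  "expansion_kernel F l P hm n z hz y =
     (if (\<forall>i\<in>{1..<n}. norm (z (Suc i)) \<le> norm (z i))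
      then (\<Sum>j=0..n. (-1)^(n-j) *
              (\<Sum>Q\<in>{Q. Q \<subseteq> {1..n} \<and> card Q = j}.
                 F (Itrunc l P hm (z n) y + (\<Sum>i\<in>Q. hz i * l (z i - y)))))
      else 0)"

end

theory Submission imports Defs begin


definition fdiff :: "(real \<Rightarrow> real) \<Rightarrow> (nat \<Rightarrow> real) \<Rightarrow> nat set \<Rightarrow> real \<Rightarrow> real" where
  "fdiff g a S x = (\<Sum>Q\<in>Pow S. (-1)^(card S - card Q) * g (x + (\<Sum>i\<in>Q. a i)))"

lemma fdiff_empty[simp]: "fdiff g a {} x = g x"
  by (simp add: fdiff_def)

lemma fdiff_insert:
  assumes S: "finite S" and i: "i \<notin> S"
  shows "fdiff g a (insert i S) x = fdiff g a S (x + a i) - fdiff g a S x"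
proof -
  have disj: "Pow S \<inter> insert i ` Pow S = {}" using i by auto
  have inj: "inj_on (insert i) (Pow S)" using i unfolding inj_on_def by (metis Diff_insert_absorb PowD subsetD)
  have fin: "finite (Pow S)" "finite (insert i ` Pow S)" using S by auto
  have cS: "card (insert i S) = Suc (card S)" using S i by simp
  have A: "(\<Sum>Q\<in>Pow S. (-1)^(card (insert i S) - card Q) * g (x + (\<Sum>j\<in>Q. a j)))
       = - fdiff g a S x"
    unfolding fdiff_def sum_negf[symmetric]
  proof (rule sum.cong[OF refl])
    fix Q assume "Q \<in> Pow S"
    then have "card Q \<le> card S" using S by (simp add: card_mono)
    then have "card (insert i S) - card Q = Suc (card S - card Q)" using cS by simp
    then show "(-1)^(card (insert i S) - card Q) * g (x + (\<Sum>j\<in>Q. a j))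
       = - ((-1)^(card S - card Q) * g (x + (\<Sum>j\<in>Q. a j)))" by simp
  qed
  have B: "(\<Sum>Q\<in>insert i ` Pow S. (-1)^(card (insert i S) - card Q) * g (x + (\<Sum>j\<in>Q. a j)))
       = fdiff g a S (x + a i)"
    unfolding sum.reindex[OF inj] fdiff_def o_def
  proof (rule sum.cong[OF refl])
    fix Q assume Q: "Q \<in> Pow S"
    then have fQ: "finite Q" and iQ: "i \<notin> Q" using S i finite_subset by auto
    then show "(-1)^(card (insert i S) - card (insert i Q)) * g (x + (\<Sum>j\<in>insert i Q. a j))
       = (-1)^(card S - card Q) * g (x + a i + (\<Sum>j\<in>Q. a j))"
      using cS by (simp add: add.assoc)
  qed
  show ?thesis
    unfolding fdiff_def[of g a "insert i S"] Pow_insert sum.union_disjoint[OF fin disj]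
    using A B unfolding fdiff_def by simp
qed

lemma fdiff_deriv:
  assumes "finite S" "\<And>i. 0 \<le> a i" "\<And>t. 0 < t \<Longrightarrow> (g has_real_derivative g' t) (at t)" "0 < t"
  shows "(fdiff g a S has_real_derivative fdiff g' a S t) (at t)"
proof -
  have "\<And>Q. Q \<in> Pow S \<Longrightarrow> ((\<lambda>x. g (x + (\<Sum>i\<in>Q. a i))) has_real_derivative g' (t + (\<Sum>i\<in>Q. a i))) (at t)"
  proof -
    fix Q assume "Q \<in> Pow S"
    have "0 \<le> (\<Sum>i\<in>Q. a i)" using assms(2) by (simp add: sum_nonneg)
    then have "(g has_real_derivative g' (t + (\<Sum>i\<in>Q. a i))) (at (t + (\<Sum>i\<in>Q. a i)))"
      using assms by auto
    then show "((\<lambda>x. g (x + (\<Sum>i\<in>Q. a i))) has_real_derivative g' (t + (\<Sum>i\<in>Q. a i))) (at t)"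
      using DERIV_shift by blast
  qed
  then show ?thesis unfolding fdiff_def[abs_def]
    by (auto intro!: DERIV_sum DERIV_cmult)
qed

lemma fdiff_cont:
  assumes "\<And>i. 0 \<le> a i" "continuous_on {0..} g"
  shows "continuous_on {0..} (fdiff g a S)"
proof -
  have "\<And>Q. continuous_on {0..} (\<lambda>x. g (x + (\<Sum>i\<in>Q. a i)))"
  proof -
    fix Q
    have "0 \<le> (\<Sum>i\<in>Q. a i)" using assms(1) by (simp add: sum_nonneg)
    then show "continuous_on {0..} (\<lambda>x. g (x + (\<Sum>i\<in>Q. a i)))"
      by (intro continuous_on_compose2[OF assms(2)] continuous_intros) auto
  qed
  then show ?thesis unfolding fdiff_def[abs_def]
    by (intro continuous_intros) auto
qed

lemma fdiff_bound:
  fixes Fd :: "nat \<Rightarrow> real \<Rightarrow> real" and B :: "nat \<Rightarrow> real"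
  assumes Fd_deriv: "\<And>k x. 0 \<le> x \<Longrightarrow> (Fd k has_real_derivative Fd (Suc k) x) (at x within {0..})"
    and bnd: "\<And>j t. j \<le> n \<Longrightarrow> 0 \<le> t \<Longrightarrow> \<bar>Fd j t\<bar> \<le> B j"
    and a: "\<And>i. 0 \<le> a i"
    and S: "finite S"
  shows "\<forall>k x T. T \<subseteq> S \<longrightarrow> 0 \<le> x \<longrightarrow> k + card T \<le> n \<longrightarrow>
     \<bar>fdiff (Fd k) a S x\<bar> \<le> 2^(card S - card T) * B (k + card T) * (\<Prod>i\<in>T. a i)"
  using S
proof (induction S rule: finite_induct)
  case empty
  show ?case using bnd by auto
next
  case (insert i S)
  have Bnn: "\<And>j. j \<le> n \<Longrightarrow> 0 \<le> B j" using bnd[of _ 0] by (meson abs_ge_zero order_trans order_refl)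
  have der: "\<And>k t. 0 < t \<Longrightarrow> (Fd k has_real_derivative Fd (Suc k) t) (at t)"
    using Fd_deriv at_within_interior[of _ "{0::real..}"] by (metis interior_Ici[of "-1::real" 0] greaterThan_iff less_imp_le neg_less_0_iff_less zero_less_one)
  have cont: "\<And>k. continuous_on {0..} (Fd k)"
    by (rule DERIV_continuous_on[OF Fd_deriv]) auto
  show ?case
  proof (intro allI impI)
    fix k and x :: real and T assume T: "T \<subseteq> insert i S" and x: "0 \<le> x" and kT: "k + card T \<le> n"
    have finT: "finite T" using T insert(1) finite_subset by blast
    have rec: "fdiff (Fd k) a (insert i S) x = fdiff (Fd k) a S (x + a i) - fdiff (Fd k) a S x"
      using fdiff_insert[OF insert(1,2)] .
    have cI: "card (insert i S) = Suc (card S)" using insert by simp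
    show "\<bar>fdiff (Fd k) a (insert i S) x\<bar> \<le> 2^(card (insert i S) - card T) * B (k + card T) * (\<Prod>i\<in>T. a i)"
    proof (cases "i \<in> T")
      case False
      then have TS: "T \<subseteq> S" using T by auto
      have cT: "card T \<le> card S" using TS insert(1) card_mono by blast
      have h1: "\<bar>fdiff (Fd k) a S (x + a i)\<bar> \<le> 2^(card S - card T) * B (k + card T) * (\<Prod>i\<in>T. a i)"
        using insert(3) TS x a[of i] kT by auto
      have h2: "\<bar>fdiff (Fd k) a S x\<bar> \<le> 2^(card S - card T) * B (k + card T) * (\<Prod>i\<in>T. a i)"
        using insert(3) TS x kT by auto
      have "card (insert i S) - card T = Suc (card S - card T)" using cI cT by simp
      then show ?thesis unfolding rec using h1 h2 by simp
    next
      case True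
      define T' where "T' = T - {i}"
      have T'S: "T' \<subseteq> S" using T unfolding T'_def by auto
      have cT: "card T = Suc (card T')" using True finT unfolding T'_def
        by (simp add: card_Suc_Diff1 card_gt_0_iff Suc_pred) (metis card_0_eq empty_iff not_gr0 Suc_pred)
      have pT: "(\<Prod>j\<in>T. a j) = a i * (\<Prod>j\<in>T'. a j)" using True finT unfolding T'_def
        by (simp add: prod.remove)
      have cd: "card (insert i S) - card T = card S - card T'" using cI cT by simp
      define R where "R = 2^(card S - card T') * B (Suc k + card T') * (\<Prod>j\<in>T'. a j)"
      have Rnn: "0 \<le> R" unfolding R_def using Bnn[of "Suc k + card T'"] kT cT a by (auto intro!: prod_nonneg mult_nonneg_nonneg)
      have IH: "\<And>t. 0 \<le> t \<Longrightarrow> \<bar>fdiff (Fd (Suc k)) a S t\<bar> \<le> R"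
        unfolding R_def using insert(3)[rule_format, of T' _ "Suc k"] T'S kT cT by simp
      have "\<bar>fdiff (Fd k) a S (x + a i) - fdiff (Fd k) a S x\<bar> \<le> a i * R"
      proof (cases "a i = 0")
        case True then show ?thesis by simp
      next
        case False
        then have lt: "x < x + a i" using a[of i] by simp
        have dk: "\<And>t. 0<t \<Longrightarrow> (fdiff (Fd k) a S has_real_derivative fdiff (Fd (Suc k)) a S t) (at t)"
          by (rule fdiff_deriv[OF insert(1)]) (use a der in auto)
        have "continuous_on {x..x + a i} (fdiff (Fd k) a S)"
          by (rule continuous_on_subset[OF fdiff_cont[OF a cont]]) (use x in auto)
        moreover have "\<And>t. x < t \<Longrightarrow> t < x + a i \<Longrightarrow> fdiff (Fd k) a S differentiable (at t)"
        proof -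
          fix t assume "x < t" "t < x + a i"
          then have "0 < t" using x by linarith
          then show "fdiff (Fd k) a S differentiable (at t)"
            unfolding real_differentiable_def using dk[OF \<open>0 < t\<close>] by blast
        qed
        ultimately obtain L t where t: "x < t" "t < x + a i" "DERIV (fdiff (Fd k) a S) t :> L"
          "fdiff (Fd k) a S (x + a i) - fdiff (Fd k) a S x = (x + a i - x) * L"
          using MVT[OF lt] by blast
        have "L = fdiff (Fd (Suc k)) a S t"
          using DERIV_unique[OF t(3) dk] t x by simp
        then have "\<bar>L\<bar> \<le> R" using IH t x by simp
        then show ?thesis using t(4) a[of i]
          by (simp add: abs_mult mult_left_mono)
      qed
      then show ?thesis unfolding rec cd pT R_def using cT by (simp add: mult_ac)
    qed
  qed
qed



lemma lborel_min_set:
  fixes c :: real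
  shows "emeasure lborel {a. 0 \<le> a \<and> a \<le> 1 \<and> a < c} = ennreal (min 1 c)"
proof (cases "c \<le> 0")
  case True
  then have "{a. 0 \<le> a \<and> a \<le> 1 \<and> a < c} = {}" by auto
  then have "emeasure lborel {a. 0 \<le> a \<and> a \<le> 1 \<and> a < c} = 0" by (simp only: emeasure_empty)
  then show ?thesis using True by (simp add: ennreal_neg)
next
  case False
  show ?thesis
  proof (cases "c \<le> 1")
    case True
    then have "{a. 0 \<le> a \<and> a \<le> 1 \<and> a < c} = {0..<c}" by auto
    then show ?thesis using True False by simp
  next
    case F2: False
    then have "{a::real. 0 \<le> a \<and> a \<le> 1 \<and> a < c} = {0..1}" by auto
    then show ?thesis using F2 False by simp
  qed
qed

lemma layer_cake:
  assumes Mp: "prob_space M" and Ms: "sets M = sets borel" and c: "0 \<le> c"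
  shows "(\<integral>\<^sup>+ x. ennreal (min 1 (x*c)) \<partial>M)
       = (\<integral>\<^sup>+ a. ennreal (indicator {0..1} a * ccdf_div M a c) \<partial>lborel)"
proof -
  interpret prob_space M by (rule Mp)
  interpret P: pair_sigma_finite M lborel
    by (simp add: pair_sigma_finite_def lborel.sigma_finite_measure_axioms sigma_finite_measure_axioms)
  define f :: "real \<Rightarrow> real \<Rightarrow> ennreal" where
    "f x a = indicator {p::real\<times>real. 0 \<le> snd p \<and> snd p \<le> 1 \<and> snd p < fst p * c} (x,a)" for x a
  have mb: "(\<lambda>p::real\<times>real. indicator {p::real\<times>real. 0 \<le> snd p \<and> snd p \<le> 1 \<and> snd p < fst p * c} p :: ennreal)
      \<in> borel_measurable (borel \<Otimes>\<^sub>M borel)"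
    by measurable
  have meas: "case_prod f \<in> borel_measurable (M \<Otimes>\<^sub>M lborel)"
    unfolding measurable_cong_sets[OF sets_pair_measure_cong[OF Ms sets_lborel] refl]
    using mb unfolding f_def by simp
  have in1: "(\<integral>\<^sup>+ a. f x a \<partial>lborel) = ennreal (min 1 (x*c))" for x
  proof -
    have "(\<lambda>a. f x a) = indicator {a. 0 \<le> a \<and> a \<le> 1 \<and> a < x*c}"
      unfolding f_def by (auto simp: indicator_def)
    then show ?thesis using lborel_min_set[of "x*c"] by simp
  qed
  have in2: "(\<integral>\<^sup>+ x. f x a \<partial>M) = ennreal (indicator {0..1} a * ccdf_div M a c)" for a
  proof (cases "0 \<le> a \<and> a \<le> 1")
    case False
    then have "(\<lambda>x. f x a) = (\<lambda>x. 0)" unfolding f_def by (auto simp: indicator_def)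
    then show ?thesis using False by simp
  next
    case True
    show ?thesis
    proof (cases "c = 0")
      case True
      then have "(\<lambda>x. f x a) = (\<lambda>x. 0)" using \<open>0 \<le> a \<and> a \<le> 1\<close> unfolding f_def by (auto simp: indicator_def)
      then show ?thesis using True by (simp add: ccdf_div_def)
    next
      case False
      then have cp: "0 < c" using c by simp
      have "(\<lambda>x. f x a) = indicator {a/c<..}"
        using True cp unfolding f_def by (auto simp: indicator_def field_simps)
      moreover have "{a/c<..} \<in> sets M" using Ms by simp
      moreover have "{a/c<..} = {x. a/c < x}" by auto
      ultimately show ?thesis using True False
        by (simp add: emeasure_eq_measure ccdf_div_def ccdf_def)
    qed
  qed
  have "(\<integral>\<^sup>+ x. ennreal (min 1 (x*c)) \<partial>M) = (\<integral>\<^sup>+ x. (\<integral>\<^sup>+ a. f x a \<partial>lborel) \<partial>M)"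
    using in1 by simp
  also have "\<dots> = (\<integral>\<^sup>+ a. (\<integral>\<^sup>+ x. f x a \<partial>M) \<partial>lborel)"
    using P.Fubini'[OF meas] by simp
  also have "\<dots> = (\<integral>\<^sup>+ a. ennreal (indicator {0..1} a * ccdf_div M a c) \<partial>lborel)"
    using in2 by simp
  finally show ?thesis .
qed

lemma ccdf_meas:
  assumes Mp: "prob_space M" and Ms: "sets M = sets borel"
  shows "(\<lambda>t. ccdf M t) \<in> borel_measurable borel"
proof -
  interpret prob_space M by (rule Mp)
  have "mono (\<lambda>t. - ccdf M t)"
  proof (rule monoI)
    fix t s :: real assume "t \<le> s"
    then have "{x. s < x} \<subseteq> {x. t < x}" by auto
    moreover have "{x. t < x} \<in> sets M" using Ms by (simp add: greaterThan_def[symmetric])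
    ultimately show "- ccdf M t \<le> - ccdf M s" unfolding ccdf_def
      by (simp add: finite_measure_mono)
  qed
  then have "(\<lambda>t. - ccdf M t) \<in> borel_measurable borel" by (rule borel_measurable_mono)
  then have "(\<lambda>t. - (- ccdf M t)) \<in> borel_measurable borel" by measurable
  then show ?thesis by simp
qed

lemma ccdf_div_meas:
  assumes Mp: "prob_space M" and Ms: "sets M = sets borel"
  shows "(\<lambda>a. ccdf_div M a c) \<in> borel_measurable borel"
proof (cases "c = 0")
  case True then show ?thesis by (simp add: ccdf_div_def)
next
  case False
  have "(\<lambda>a. ccdf M (a / c)) \<in> borel_measurable borel"
    using measurable_compose[OF _ ccdf_meas[OF Mp Ms], of "\<lambda>a. a / c" borel] by simp
  then show ?thesis using False by (simp add: ccdf_div_def)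
qed

lemma R_eq:
  assumes Mp: "prob_space M" and Ms: "sets M = sets borel" and c: "0 \<le> c"
  shows "(LBINT a=0..1. ccdf_div M a c) = enn2real (\<integral>\<^sup>+ x. ennreal (min 1 (x*c)) \<partial>M)"
proof -
  have m: "(\<lambda>a. ccdf_div M a c) \<in> borel_measurable borel" by (rule ccdf_div_meas[OF Mp Ms])
  have nn: "0 \<le> ccdf_div M a c" for a by (simp add: ccdf_div_def ccdf_def)
  have "(LBINT a=0..1. ccdf_div M a c) = (LBINT a:{0..1}. ccdf_div M a c)"
    using interval_integral_Icc[of 0 1 "\<lambda>a. ccdf_div M a c"] by (simp add: zero_ereal_def one_ereal_def)
  also have "\<dots> = integral\<^sup>L lborel (\<lambda>a. indicator {0..1} a * ccdf_div M a c)"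
    by (simp add: set_lebesgue_integral_def)
  also have "\<dots> = enn2real (\<integral>\<^sup>+ a. ennreal (indicator {0..1} a * ccdf_div M a c) \<partial>lborel)"
    by (rule integral_eq_nn_integral) (use m nn in auto)
  also have "\<dots> = enn2real (\<integral>\<^sup>+ x. ennreal (min 1 (x*c)) \<partial>M)"
    using layer_cake[OF Mp Ms c] by simp
  finally show ?thesis .
qed



lemma kernel_as_fdiff:
  assumes "\<And>i. i \<in> {1..n} \<Longrightarrow> a i = hz i * c i"
  shows "(\<Sum>j=0..n. (-1)^(n-j) * (\<Sum>Q\<in>{Q. Q \<subseteq> {1..n} \<and> card Q = j}. F (x0 + (\<Sum>i\<in>Q. hz i * c i))))
       = fdiff F a {1..n} x0"
proof -
  have fS: "finite (Pow {1..n})" by simp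
  have im: "card ` Pow {1..n} \<subseteq> {0..n}"
    by (auto simp: card_mono[where B="{1..n}", simplified] dest: card_mono[of "{1..n}", simplified])
  have "fdiff F a {1..n} x0 = (\<Sum>Q\<in>Pow {1..n}. (-1)^(n - card Q) * F (x0 + (\<Sum>i\<in>Q. a i)))"
    by (simp add: fdiff_def)
  also have "\<dots> = (\<Sum>j=0..n. \<Sum>Q\<in>{Q. Q \<in> Pow {1..n} \<and> card Q = j}. (-1)^(n - card Q) * F (x0 + (\<Sum>i\<in>Q. a i)))"
    by (rule sum.group[OF fS _ im, symmetric]) simp
  also have "\<dots> = (\<Sum>j=0..n. (-1)^(n-j) * (\<Sum>Q\<in>{Q. Q \<subseteq> {1..n} \<and> card Q = j}. F (x0 + (\<Sum>i\<in>Q. hz i * c i))))"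
  proof (rule sum.cong[OF refl])
    fix j
    show "(\<Sum>Q\<in>{Q. Q \<in> Pow {1..n} \<and> card Q = j}. (-1)^(n - card Q) * F (x0 + (\<Sum>i\<in>Q. a i)))
      = (-1)^(n-j) * (\<Sum>Q\<in>{Q. Q \<subseteq> {1..n} \<and> card Q = j}. F (x0 + (\<Sum>i\<in>Q. hz i * c i)))"
      unfolding sum_distrib_left
    proof (rule sum.cong)
      fix Q assume Q: "Q \<in> {Q. Q \<subseteq> {1..n} \<and> card Q = j}"
      then have "(\<Sum>i\<in>Q. a i) = (\<Sum>i\<in>Q. hz i * c i)" using assms by (intro sum.cong) auto
      then show "(-1)^(n - card Q) * F (x0 + (\<Sum>i\<in>Q. a i)) = (-1)^(n-j) * F (x0 + (\<Sum>i\<in>Q. hz i * c i))"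
        using Q by simp
    qed auto
  qed
  finally show ?thesis by simp
qed

lemma supnorm_bound:
  assumes "bounded (f ` {0..})" "0 \<le> t"
  shows "\<bar>f t\<bar> \<le> supnorm0 f"
proof -
  obtain K where K: "\<forall>x\<in>f ` {0..}. \<bar>x\<bar> \<le> K" using assms(1) bounded_real by blast
  have "bdd_above ((\<lambda>x. \<bar>f x\<bar>) ` {0..})" using K by (auto intro!: bdd_aboveI[of _ K])
  then show ?thesis unfolding supnorm0_def by (rule cSUP_upper[rotated]) (use assms in simp)
qed

lemma pointwise:
  fixes Fd :: "nat \<Rightarrow> real \<Rightarrow> real"
  assumes Fd0: "Fd 0 = F"
    and Fd_deriv: "\<And>k x. 0 \<le> x \<Longrightarrow> (Fd k has_real_derivative Fd (Suc k) x) (at x within {0..})"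
    and Fd_bounded: "\<And>k. k \<le> n \<Longrightarrow> bounded (Fd k ` {0..})"
    and c: "\<And>i. 0 \<le> c i" and hz: "\<forall>i\<in>{1..n}. 0 \<le> hz i" and x0: "0 \<le> x0"
  shows "\<bar>\<Sum>j=0..n. (-1)^(n-j) * (\<Sum>Q\<in>{Q. Q \<subseteq> {1..n} \<and> card Q = j}. F (x0 + (\<Sum>i\<in>Q. hz i * c i)))\<bar>
     \<le> Max ((\<lambda>k. 2^(n-k) * supnorm0 (Fd k)) ` {0..n}) * (\<Prod>i\<in>{1..n}. min 1 (hz i * c i))"
proof -
  define a where "a i = (if i \<in> {1..n} then hz i * c i else 0)" for i
  have a0: "0 \<le> a i" for i using hz c unfolding a_def by auto
  define B where "B j = supnorm0 (Fd j)" for j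
  have bnd: "\<bar>Fd j t\<bar> \<le> B j" if "j \<le> n" "0 \<le> t" for j t
    unfolding B_def using supnorm_bound[OF Fd_bounded[OF that(1)] that(2)] .
  define T where "T = {i\<in>{1..n}. a i \<le> 1}"
  have TS: "T \<subseteq> {1..n}" unfolding T_def by auto
  have cT: "card T \<le> n" using card_mono[OF _ TS] by simp
  have fb: "\<bar>fdiff (Fd 0) a {1..n} x0\<bar> \<le> 2^(card {1..n} - card T) * B (0 + card T) * (\<Prod>i\<in>T. a i)"
    using fdiff_bound[of Fd n B a "{1..n}", OF Fd_deriv bnd a0, rule_format, of T x0 0] TS x0 cT by simp
  have eq: "(\<Sum>j=0..n. (-1)^(n-j) * (\<Sum>Q\<in>{Q. Q \<subseteq> {1..n} \<and> card Q = j}. F (x0 + (\<Sum>i\<in>Q. hz i * c i))))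
       = fdiff F a {1..n} x0"
    by (rule kernel_as_fdiff) (simp add: a_def)
  have pT: "(\<Prod>i\<in>T. a i) = (\<Prod>i\<in>{1..n}. min 1 (hz i * c i))"
    unfolding T_def prod.inter_filter[OF finite_atLeastAtMost]
    by (rule prod.cong) (auto simp: a_def)
  have pnn: "0 \<le> (\<Prod>i\<in>{1..n}. min 1 (hz i * c i))"
    using hz c by (auto intro!: prod_nonneg)
  have mx: "2^(n - card T) * B (card T) \<le> Max ((\<lambda>k. 2^(n-k) * supnorm0 (Fd k)) ` {0..n})"
    unfolding B_def by (rule Max_ge) (use cT in auto)
  show ?thesis unfolding eq
    using fb mult_right_mono[OF mx pnn] unfolding pT Fd0 by simp
qed

theorem mainTheorem3:
  fixes M :: "real measure" and l :: "real^2 \<Rightarrow> real"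
    and F :: "real \<Rightarrow> real" and Fd :: "nat \<Rightarrow> real \<Rightarrow> real" and n :: nat
    and y :: "real^2" and P :: "(real^2) set" and hm :: "real^2 \<Rightarrow> real"
    and z :: "nat \<Rightarrow> real^2"
  assumes M_prob: "prob_space M" and M_sets: "sets M = sets borel"
    and h_nonneg: "AE x in M. 0 \<le> x"
    and l_nonneg: "\<And>x. 0 \<le> l x"
    and l_radial: "\<And>x x'. norm x = norm x' \<Longrightarrow> l x = l x'"
    and F_nonneg: "\<And>x. 0 \<le> x \<Longrightarrow> 0 \<le> F x"
    and Fd0: "Fd 0 = F"
    and Fd_deriv: "\<And>k x. 0 \<le> x \<Longrightarrow> (Fd k has_real_derivative Fd (Suc k) x) (at x within {0..})"
    and Fd_bounded: "\<And>k. k \<le> n \<Longrightarrow> bounded (Fd k ` {0..})"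
    and n_pos: "1 \<le> n"
    and P_locfin: "\<And>S. bounded S \<Longrightarrow> finite (P \<inter> S)"
    and hm_nonneg: "\<And>x. x \<in> P \<Longrightarrow> 0 \<le> hm x"
  shows "\<bar>\<integral>hz. expansion_kernel F l P hm n z hz y \<partial>(PiM {1..n} (\<lambda>_. M))\<bar>
           \<le> Max ((\<lambda>k. 2^(n-k) * supnorm0 (Fd k)) ` {0..n})
              * (\<Prod>i\<in>{1..n}. (LBINT a=0..1. ccdf_div M a (l (z i - y))))
       \<and> ennreal (Max ((\<lambda>k. 2^(n-k) * supnorm0 (Fd k)) ` {0..n})
              * (\<Prod>i\<in>{1..n}. (LBINT a=0..1. ccdf_div M a (l (z i - y)))))
           \<le> ennreal (Max ((\<lambda>k. 2^(n-k) * supnorm0 (Fd k)) ` {0..n}))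
              * (\<Prod>i\<in>{1..n}. min 1 ((\<integral>\<^sup>+ x. ennreal x \<partial>M) * ennreal (l (z i - y))))"
proof -
  interpret prob_space M by (rule M_prob)
  interpret PS: product_sigma_finite "\<lambda>_::nat. M"
    by (simp add: product_sigma_finite_def sigma_finite_measure_axioms)
  define C where "C = Max ((\<lambda>k. 2^(n-k) * supnorm0 (Fd k)) ` {0..n})"
  define c where "c i = l (z i - y)" for i
  define x0 where "x0 = Itrunc l P hm (z n) y"
  define N where "N i = (\<integral>\<^sup>+ x. ennreal (min 1 (x * c i)) \<partial>M)" for i
  define K where "K hz = expansion_kernel F l P hm n z hz y" for hz
  define Eh where "Eh = (\<integral>\<^sup>+ x. ennreal x \<partial>M)"
  have c0: "0 \<le> c i" for i unfolding c_def by (rule l_nonneg)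
  have x00: "0 \<le> x0" unfolding x0_def Itrunc_def
    by (rule sum_nonneg) (use hm_nonneg l_nonneg in auto)
  have C0: "0 \<le> C"
  proof -
    have "\<bar>Fd 0 0\<bar> \<le> supnorm0 (Fd 0)" by (rule supnorm_bound[OF Fd_bounded]) auto
    then have "0 \<le> 2^(n-0) * supnorm0 (Fd 0)" by simp
    also have "\<dots> \<le> C" unfolding C_def by (rule Max_ge) (auto intro!: image_eqI[where x=0])
    finally show ?thesis .
  qed
  have Mm: "borel_measurable M = borel_measurable borel"
    by (rule measurable_cong_sets[OF M_sets refl])
  have mf: "(\<lambda>x. min 1 (x * c i)) \<in> borel_measurable M" for i
    unfolding Mm by measurable
  have Rdef: "(LBINT a=0..1. ccdf_div M a (l (z i - y))) = enn2real (N i)" for i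
    unfolding N_def c_def[symmetric] using R_eq[OF M_prob M_sets c0] by (simp add: mult.commute)
  have Rdef': "(LBINT a=0..1. ccdf_div M a (c i)) = enn2real (N i)" for i
    using Rdef[of i] unfolding c_def .
  have N1: "N i \<le> 1" for i
  proof -
    have "N i \<le> (\<integral>\<^sup>+ x. 1 \<partial>M)" unfolding N_def by (rule nn_integral_mono) simp
    also have "\<dots> = 1" by (simp add: emeasure_space_1)
    finally show ?thesis .
  qed
  have Nh: "N i \<le> Eh * ennreal (c i)" for i
  proof -
    have "N i \<le> (\<integral>\<^sup>+ x. ennreal x * ennreal (c i) \<partial>M)" unfolding N_def
    proof (rule nn_integral_mono)
      fix x :: real
      show "ennreal (min 1 (x * c i)) \<le> ennreal x * ennreal (c i)"
      proof (cases "0 \<le> x")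
        case True
        then have "ennreal (min 1 (x * c i)) \<le> ennreal (x * c i)" by (simp add: ennreal_leI)
        then show ?thesis using True c0 by (simp add: ennreal_mult)
      next
        case False
        then have "min 1 (x * c i) \<le> 0" using c0[of i] by (simp add: mult_nonpos_nonneg min_le_iff_disj)
        then show ?thesis by (simp add: ennreal_neg)
      qed
    qed
    also have "\<dots> = Eh * ennreal (c i)" unfolding Eh_def
      by (rule nn_integral_multc) (simp add: Mm)
    finally show ?thesis .
  qed
  have intE: "integrable M (\<lambda>x. min 1 (x * c i))" for i
  proof (rule integrable_const_bound[where B=1])
    show "AE x in M. norm (min 1 (x * c i)) \<le> 1"
      using h_nonneg by eventually_elim (use c0[of i] in auto)
  qed (rule mf)
  have Eeq: "(\<integral>x. min 1 (x * c i) \<partial>M) = enn2real (N i)" for i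
    unfolding N_def
    by (rule integral_eq_nn_integral[OF mf]) (use h_nonneg c0[of i] in \<open>auto elim: AE_mp\<close>)
  have AEnn: "AE hz in PiM {1..n} (\<lambda>_. M). \<forall>i\<in>{1..n}. 0 \<le> hz i"
    by (rule AE_finite_allI) (auto intro!: AE_PiM_component[where M="\<lambda>_. M"] M_prob h_nonneg)
  have ptw: "AE hz in PiM {1..n} (\<lambda>_. M). \<bar>K hz\<bar> \<le> C * (\<Prod>i\<in>{1..n}. min 1 (hz i * c i))"
    using AEnn
  proof eventually_elim
    case (elim hz)
    have pnn: "0 \<le> C * (\<Prod>i\<in>{1..n}. min 1 (hz i * c i))"
      using elim c0 C0 by (intro mult_nonneg_nonneg prod_nonneg) auto
    show ?case
    proof (cases "\<forall>i\<in>{1..<n}. norm (z (Suc i)) \<le> norm (z i)")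
      case True
      then have "K hz = (\<Sum>j=0..n. (-1)^(n-j) * (\<Sum>Q\<in>{Q. Q \<subseteq> {1..n} \<and> card Q = j}. F (x0 + (\<Sum>i\<in>Q. hz i * c i))))"
        unfolding K_def expansion_kernel_def x0_def c_def by simp
      then show ?thesis unfolding C_def
        using pointwise[OF Fd0 Fd_deriv Fd_bounded c0 elim x00] by simp
    next
      case False
      then have "K hz = 0" unfolding K_def expansion_kernel_def by (simp only: if_False)
      then show ?thesis using pnn by simp
    qed
  qed
  have intp: "integrable (PiM {1..n} (\<lambda>_. M)) (\<lambda>hz. \<Prod>i\<in>{1..n}. min 1 (hz i * c i))"
    using PS.product_integrable_prod[of "{1..n}" "\<lambda>i x. min 1 (x * c i)"] intE by simp
  have intg: "integrable (PiM {1..n} (\<lambda>_. M)) (\<lambda>hz. C * (\<Prod>i\<in>{1..n}. min 1 (hz i * c i)))"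
    using intp by simp
  have intg_eq: "(\<integral>hz. C * (\<Prod>i\<in>{1..n}. min 1 (hz i * c i)) \<partial>PiM {1..n} (\<lambda>_. M))
      = C * (\<Prod>i\<in>{1..n}. enn2real (N i))"
    using PS.product_integral_prod[of "{1..n}" "\<lambda>i x. min 1 (x * c i)"] intE Eeq by simp
  have Nnn: "0 \<le> (\<Prod>i\<in>{1..n}. enn2real (N i))" by (auto intro!: prod_nonneg)
  have part1: "\<bar>\<integral>hz. K hz \<partial>PiM {1..n} (\<lambda>_. M)\<bar> \<le> C * (\<Prod>i\<in>{1..n}. enn2real (N i))"
  proof (cases "integrable (PiM {1..n} (\<lambda>_. M)) K")
    case True
    have "\<bar>\<integral>hz. K hz \<partial>PiM {1..n} (\<lambda>_. M)\<bar> \<le> (\<integral>hz. \<bar>K hz\<bar> \<partial>PiM {1..n} (\<lambda>_. M))"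
      using integral_norm_bound[of _ K] by simp
    also have "\<dots> \<le> (\<integral>hz. C * (\<Prod>i\<in>{1..n}. min 1 (hz i * c i)) \<partial>PiM {1..n} (\<lambda>_. M))"
      by (rule integral_mono_AE[OF _ intg ptw]) (use True in simp)
    finally show ?thesis using intg_eq by (simp only:)
  next
    case False
    then show ?thesis using not_integrable_integral_eq[OF False] C0 Nnn by simp
  qed
  have part2: "ennreal (C * (\<Prod>i\<in>{1..n}. enn2real (N i))) \<le> ennreal C * (\<Prod>i\<in>{1..n}. min 1 (Eh * ennreal (c i)))"
  proof -
    have "ennreal (C * (\<Prod>i\<in>{1..n}. enn2real (N i))) = ennreal C * (\<Prod>i\<in>{1..n}. ennreal (enn2real (N i)))"
      using C0 Nnn by (simp add: ennreal_mult prod_ennreal)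
    also have "\<dots> = ennreal C * (\<Prod>i\<in>{1..n}. N i)"
    proof -
      have "N i < top" for i using N1[of i] by (simp add: order_le_less_trans)
      then show ?thesis by simp
    qed
    also have "\<dots> \<le> ennreal C * (\<Prod>i\<in>{1..n}. min 1 (Eh * ennreal (c i)))"
      by (intro mult_left_mono prod_mono_ennreal) (use N1 Nh in auto)
    finally show ?thesis .
  qed
  show ?thesis
    using part1 part2 unfolding C_def[symmetric] K_def[symmetric] Eh_def[symmetric] c_def[symmetric] by (simp only: Rdef')
qed

end
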